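(* In the setting of the context, assume $q<q_c$, let $\beta\in(0,1)$, and suppose $\bar\delta(q)>0$ and $$N_q>\frac{\log(2/\beta)}{2\bar\delta(q)^2}.$$ Then with probability at least $1-\beta$ (over the samples) the following holds: if $\hat q<q_c$, then $\hat K$ mean-square stabilizes the system.
   Context: Let $A\in\mathbb{R}^{n\times n}$, $B\in\mathbb{R}^{n\times m}$ with $(A,B)$ stabilizable, and let $Q$, $R$ be symmetric positive definite. Consider $x_{t+1}=Ax_t+\lambda_tBu_t$, $t\ge0$, with $x_0$ random with finite mean and covariance and $\{\lambda_t\}$ i.i.d. Bernoulli, independent of $x_0$, with $\mathcal{P}(\lambda_t=0)=q$, $q\in(0,1)$ unknown. The estimate is $\hat q=\frac1{N_q}\sum_{i=1}^{N_q}(1-\lambda_i)$ from $N_q$ i.i.d. samples $\lambda_1,\dots,\lambda_{N_q}$ with the same Bernoulli law. For $p\in[0,1)$ the modified Riccati equation with parameter $p$ is $X=Q+A^\top XA-(1-p)A^\top XB(R+B^\top XB)^{-1}B^\top XA$; $q_c$ is the critical loss probability such that for every $p\in[0,q_c)$ this equation has a unique positive definite solution. For $\hat q\in[0,q_c)$ let $\hat P$ be the positive definite solution for parameter $\hat q$ and $\hat K=-(R+B^\top\hat PB)^{-1}B^\top\hat PA$; $\hat K$ mean-square stabilizes the system if the closed loop $x_{t+1}=(A+\lambda_tB\hat K)x_t$ satisfies $\lim_{t\to\infty}\mathbb{E}\{x_t^\top x_t\}=0$. Define $\mathcal C(q,\hat q)=Q+(1-q)\hat K^\top R\hat K-(q-\hat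 q)A^\top\hat PB(R+B^\top\hat PB)^{-1}B^\top\hat PA$ and the stability threshold $\bar\delta(q)=\sup\{\delta\ge0:\ \mathcal C(q,\hat q)\succ0 \text{ for all } \hat q\in[0,q_c)\text{ with } q-\hat q<\delta\}$. *)

theory Defs
  imports "HOL-Analysis.Analysis" "HOL-Probability.Probability"
begin

definition posdef :: "real^'n^'n \<Rightarrow> bool" where
  "posdef X \<longleftrightarrow> transpose X = X \<and> (\<forall>x. x \<noteq> 0 \<longrightarrow> x \<bullet> (X *v x) > 0)"

definition stabilizable :: "real^'n^'n \<Rightarrow> real^'m^'n \<Rightarrow> bool" where
  "stabilizable A B \<longleftrightarrow>
     (\<exists>K :: real^'n^'m. \<forall>x0. (\<lambda>t. ((\<lambda>x. (A + B ** K) *v x) ^^ t) x0) \<longlonglongrightarrow> 0)"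

definition mre :: "real^'n^'n \<Rightarrow> real^'m^'n \<Rightarrow> real^'n^'n \<Rightarrow> real^'m^'m
                   \<Rightarrow> real \<Rightarrow> real^'n^'n \<Rightarrow> bool" where
  "mre A B Q R p X \<longleftrightarrow>
     X = Q + transpose A ** X ** A
         - (1 - p) *\<^sub>R (transpose A ** X ** B ** matrix_inv (R + transpose B ** X ** B)
                          ** transpose B ** X ** A)"

definition Phat :: "real^'n^'n \<Rightarrow> real^'m^'n \<Rightarrow> real^'n^'n \<Rightarrow> real^'m^'m
                   \<Rightarrow> real \<Rightarrow> real^'n^'n" where
  "Phat A B Q R p = (THE X. posdef X \<and> mre A B Q R p X)"

definition Khat :: "real^'n^'n \<Rightarrow> real^'m^'n \<Rightarrow> real^'n^'n \<Rightarrow> real^'m^'m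
                   \<Rightarrow> real \<Rightarrow> real^'n^'m" where
  "Khat A B Q R p = (let P = Phat A B Q R p in
      - (matrix_inv (R + transpose B ** P ** B) ** transpose B ** P ** A))"

primrec cl_state :: "real^'n^'n \<Rightarrow> real^'m^'n \<Rightarrow> real^'n^'m
                     \<Rightarrow> (nat \<Rightarrow> bool) \<Rightarrow> real^'n \<Rightarrow> nat \<Rightarrow> real^'n" where
  "cl_state A B K lam x0 0 = x0"
| "cl_state A B K lam x0 (Suc t) =
     (A + (if lam t then 1 else 0) *\<^sub>R (B ** K)) *v cl_state A B K lam x0 t"

(* E{x_t^T x_t}: x_0 ~ M independent of i.i.d. lambda_0..lambda_{t-1},
   with P(lambda_i = 0) = q, i.e. lambda_i = True with probability 1 - q *)
definition ms_energy :: "real^'n^'n \<Rightarrow> real^'m^'n \<Rightarrow> real^'n^'m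
                     \<Rightarrow> real \<Rightarrow> (real^'n) measure \<Rightarrow> nat \<Rightarrow> real" where
  "ms_energy A B K q M t =
     integral\<^sup>L (M \<Otimes>\<^sub>M measure_pmf (Pi_pmf {..<t} False (\<lambda>_. bernoulli_pmf (1 - q))))
       (\<lambda>(x0, lam). (cl_state A B K lam x0 t) \<bullet> (cl_state A B K lam x0 t))"

definition ms_stabilizes :: "real^'n^'n \<Rightarrow> real^'m^'n \<Rightarrow> real^'n^'m
                     \<Rightarrow> real \<Rightarrow> (real^'n) measure \<Rightarrow> bool" where
  "ms_stabilizes A B K q M \<longleftrightarrow> (ms_energy A B K q M \<longlonglongrightarrow> 0)"

definition Cmat :: "real^'n^'n \<Rightarrow> real^'m^'n \<Rightarrow> real^'n^'n \<Rightarrow> real^'m^'m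
                   \<Rightarrow> real \<Rightarrow> real \<Rightarrow> real^'n^'n" where
  "Cmat A B Q R q qh = (let P = Phat A B Q R qh; K = Khat A B Q R qh in
      Q + (1 - q) *\<^sub>R (transpose K ** R ** K)
        - (q - qh) *\<^sub>R (transpose A ** P ** B ** matrix_inv (R + transpose B ** P ** B)
                         ** transpose B ** P ** A))"

(* stability threshold, as an extended real (it is +infinity when the set is unbounded) *)
definition delta_bar :: "real^'n^'n \<Rightarrow> real^'m^'n \<Rightarrow> real^'n^'n \<Rightarrow> real^'m^'m
                   \<Rightarrow> real \<Rightarrow> real \<Rightarrow> ereal" where
  "delta_bar A B Q R qc q = Sup (ereal ` {\<delta>. \<delta> \<ge> 0 \<and>
      (\<forall>qh. 0 \<le> qh \<and> qh < qc \<and> q - qh < \<delta> \<longrightarrow> posdef (Cmat A B Q R q qh))})"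

definition qhat :: "nat \<Rightarrow> (nat \<Rightarrow> bool) \<Rightarrow> real" where
  "qhat N lam = (\<Sum>i\<in>{1..N}. (1 - of_bool (lam i))) / real N"

end

theory Submission
  imports Defs
begin


lemma inner_transp: "(u::real^'n) \<bullet> (X *v w) = (transpose X *v u) \<bullet> w"
  by (metis dot_lmul_matrix transpose_transpose vector_transpose_matrix)

lemma inner_vmul: "(x::real^'n) \<bullet> (v v* B) = (B *v x) \<bullet> v"
  by (metis dot_lmul_matrix inner_commute)

lemma posdef_inner_pos: "posdef X \<Longrightarrow> x \<noteq> 0 \<Longrightarrow> x \<bullet> (X *v x) > 0"
  unfolding posdef_def by auto

lemma posdef_sym: "posdef X \<Longrightarrow> transpose X = X"
  unfolding posdef_def by auto

lemma posdef_nonneg: "posdef X \<Longrightarrow> 0 \<le> x \<bullet> (X *v x)"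
  by (cases "x = 0") (auto dest: posdef_inner_pos[of X x])

lemma invertible_S:
  fixes R :: "real^'m^'m" and B :: "real^'m^'n" and P :: "real^'n^'n"
  assumes "posdef R" "posdef P"
  shows "invertible (R + transpose B ** P ** B)"
proof -
  have "\<forall>x. (R + transpose B ** P ** B) *v x = 0 \<longrightarrow> x = 0"
  proof (intro allI impI, rule ccontr)
    fix x assume h: "(R + transpose B ** P ** B) *v x = 0" "x \<noteq> 0"
    have "x \<bullet> ((R + transpose B ** P ** B) *v x) = x \<bullet> (R *v x) + (B *v x) \<bullet> (P *v (B *v x))"
      by (simp add: matrix_vector_mult_add_rdistrib inner_add_right matrix_vector_mul_assoc[symmetric] inner_vmul)
    moreover have "x \<bullet> (R *v x) > 0" using posdef_inner_pos[OF assms(1) h(2)] .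
    moreover have "(B *v x) \<bullet> (P *v (B *v x)) \<ge> 0" using posdef_nonneg[OF assms(2)] .
    ultimately show False using h(1) by simp
  qed
  then show ?thesis using matrix_left_invertible_ker invertible_left_inverse by metis
qed

lemma matrix_inv_right: "invertible S \<Longrightarrow> (S::real^'m^'m) ** matrix_inv S = mat 1"
  unfolding invertible_def matrix_inv_def by (rule someI_ex[THEN conjunct1])

lemma tr: "(u::real^'n) \<bullet> (transpose X *v w) = (X *v u) \<bullet> w"
  using inner_transp[of u "transpose X" w] by simp

lemma tr2: "(X *v u) \<bullet> (w::real^'n) = u \<bullet> (transpose X *v w)"
  using tr by metis

lemma key_identity:
  fixes A P Q :: "real^'n^'n" and B :: "real^'m^'n" and R :: "real^'m^'m" and q qh :: real
  assumes Ppd: "posdef P" and Rpd: "posdef R" and mre: "mre A B Q R qh P"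
  defines "S \<equiv> R + transpose B ** P ** B"
  defines "K \<equiv> - (matrix_inv S ** transpose B ** P ** A)"
  defines "C \<equiv> Q + (1 - q) *\<^sub>R (transpose K ** R ** K)
        - (q - qh) *\<^sub>R (transpose A ** P ** B ** matrix_inv S ** transpose B ** P ** A)"
  shows "(1 - q) * (((A + B ** K) *v x) \<bullet> (P *v ((A + B ** K) *v x)))
           + q * ((A *v x) \<bullet> (P *v (A *v x))) = x \<bullet> (P *v x) - x \<bullet> (C *v x)"
proof -
  define Mi where "Mi = matrix_inv S"
  define y where "y = A *v x"
  define py where "py = P *v y"
  define s where "s = transpose B *v py"
  define m where "m = Mi *v s"
  define u where "u = - m"
  have Psym: "transpose P = P" using posdef_sym[OF Ppd] .
  have inv: "S ** Mi = mat 1" unfolding Mi_def S_def by (rule matrix_inv_right[OF invertible_S[OF Rpd Ppd]])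
  have Sm: "S *v m = s" unfolding m_def matrix_vector_mul_assoc inv by simp
  have Gx: "x \<bullet> ((transpose A ** P ** B ** Mi ** transpose B ** P ** A) *v x) = s \<bullet> m"
  proof -
    have "(transpose A ** P ** B ** Mi ** transpose B ** P ** A) *v x
        = transpose A *v (P *v (B *v m))"
      unfolding m_def s_def py_def y_def by (simp only: matrix_vector_mul_assoc matrix_mul_assoc)
    then have "x \<bullet> ((transpose A ** P ** B ** Mi ** transpose B ** P ** A) *v x) = y \<bullet> (P *v (B *v m))"
      by (simp only: tr y_def)
    also have "\<dots> = py \<bullet> (B *v m)" by (metis tr2 Psym py_def)
    also have "\<dots> = s \<bullet> m" by (metis tr2 inner_commute s_def)
    finally show ?thesis .
  qed
  have Kx: "K *v x = u"
  proof -
    have "K *v x = - ((Mi ** transpose B ** P ** A) *v x)" unfolding K_def Mi_def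
      by (simp add: matrix_vector_mult_diff_rdistrib[of 0, simplified])
    also have "(Mi ** transpose B ** P ** A) *v x = m"
      unfolding m_def s_def py_def y_def by (simp only: matrix_vector_mul_assoc matrix_mul_assoc)
    finally show ?thesis by (simp add: u_def)
  qed
  have F1: "x \<bullet> (P *v x) = x \<bullet> (Q *v x) + y \<bullet> py - (1 - qh) * (s \<bullet> m)"
  proof -
    have "x \<bullet> (P *v x) = x \<bullet> ((Q + transpose A ** P ** A
         - (1 - qh) *\<^sub>R (transpose A ** P ** B ** Mi ** transpose B ** P ** A)) *v x)"
      using mre unfolding mre_def Mi_def S_def by metis
    also have "\<dots> = x \<bullet> (Q *v x) + x \<bullet> ((transpose A ** P ** A) *v x)
         - (1 - qh) * (x \<bullet> ((transpose A ** P ** B ** Mi ** transpose B ** P ** A) *v x))"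
      by (simp add: matrix_vector_mult_add_rdistrib matrix_vector_mult_diff_rdistrib
          inner_add_right inner_diff_right scaleR_matrix_vector_assoc[symmetric])
    also have "x \<bullet> ((transpose A ** P ** A) *v x) = y \<bullet> py"
      unfolding py_def y_def by (simp only: matrix_vector_mul_assoc[symmetric] tr)
    finally show ?thesis unfolding Gx .
  qed
  have F2: "x \<bullet> (C *v x) = x \<bullet> (Q *v x) + (1 - q) * (u \<bullet> (R *v u)) - (q - qh) * (s \<bullet> m)"
  proof -
    have "x \<bullet> (C *v x) = x \<bullet> (Q *v x) + (1 - q) * (x \<bullet> ((transpose K ** R ** K) *v x))
         - (q - qh) * (x \<bullet> ((transpose A ** P ** B ** Mi ** transpose B ** P ** A) *v x))"
      unfolding C_def Mi_def
      by (simp add: matrix_vector_mult_add_rdistrib matrix_vector_mult_diff_rdistrib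
          inner_add_right inner_diff_right scaleR_matrix_vector_assoc[symmetric])
    also have "x \<bullet> ((transpose K ** R ** K) *v x) = u \<bullet> (R *v u)"
      by (simp only: matrix_vector_mul_assoc[symmetric] tr Kx)
    finally show ?thesis unfolding Gx .
  qed
  have F3: "((A + B ** K) *v x) \<bullet> (P *v ((A + B ** K) *v x)) = y \<bullet> py - s \<bullet> m - u \<bullet> (R *v u)"
  proof -
    have e: "(A + B ** K) *v x = y + B *v u"
      by (simp add: matrix_vector_mult_add_rdistrib matrix_vector_mul_assoc[symmetric] Kx y_def)
    have t1: "y \<bullet> (P *v (B *v u)) = s \<bullet> u"
    proof -
      have "y \<bullet> (P *v (B *v u)) = (transpose P *v y) \<bullet> (B *v u)" by (rule inner_transp)
      also have "\<dots> = py \<bullet> (B *v u)" by (simp only: Psym py_def)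
      also have "\<dots> = u \<bullet> s" unfolding s_def by (subst inner_commute, rule tr2)
      finally show ?thesis by (simp only: inner_commute)
    qed
    have t2: "(B *v u) \<bullet> (P *v y) = u \<bullet> s"
      unfolding s_def py_def by (rule tr2)
    have t3: "(B *v u) \<bullet> (P *v (B *v u)) = u \<bullet> (S *v u) - u \<bullet> (R *v u)"
    proof -
      have "(B *v u) \<bullet> (P *v (B *v u)) = u \<bullet> ((transpose B ** P ** B) *v u)"
        by (simp only: tr2 matrix_vector_mul_assoc[symmetric])
      also have "\<dots> = u \<bullet> (S *v u) - u \<bullet> (R *v u)"
        unfolding S_def by (simp add: matrix_vector_mult_add_rdistrib inner_add_right)
      finally show ?thesis .
    qed
    have Su: "S *v u = - s" unfolding u_def using Sm
      by (metis matrix_vector_mult_diff_distrib[of S 0 m, simplified] )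
    have "((A + B ** K) *v x) \<bullet> (P *v ((A + B ** K) *v x))
       = y \<bullet> py + y \<bullet> (P *v (B *v u)) + (B *v u) \<bullet> (P *v y) + (B *v u) \<bullet> (P *v (B *v u))"
      unfolding e py_def by (simp add: matrix_vector_right_distrib inner_add_left inner_add_right)
    also have "\<dots> = y \<bullet> py + 2 * (u \<bullet> s) + u \<bullet> (S *v u) - u \<bullet> (R *v u)"
      unfolding t1 t2 t3 by (simp add: inner_commute)
    also have "\<dots> = y \<bullet> py - s \<bullet> m - u \<bullet> (R *v u)"
      unfolding Su by (simp add: u_def inner_commute)
    finally show ?thesis .
  qed
  show ?thesis unfolding F1 F2 F3 y_def[symmetric] py_def[symmetric] by (simp add: algebra_simps)
qed



lemma quad_upper: "\<exists>b>0. \<forall>x. (x::real^'n) \<bullet> (C *v x) \<le> b * (x \<bullet> x)"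
proof -
  obtain K where K: "K > 0" "\<And>x. norm (C *v x) \<le> norm x * K"
    using bounded_linear.pos_bounded[OF matrix_vector_mul_bounded_linear[of C]] by blast
  have "x \<bullet> (C *v x) \<le> K * (x \<bullet> x)" for x
  proof -
    have "x \<bullet> (C *v x) \<le> norm x * norm (C *v x)" by (rule norm_cauchy_schwarz)
    also have "\<dots> \<le> norm x * (norm x * K)" using K(2)[of x] by (simp add: mult_left_mono)
    also have "\<dots> = K * (x \<bullet> x)" by (simp add: power2_norm_eq_inner[symmetric] power2_eq_square)
    finally show ?thesis .
  qed
  with K show ?thesis by blast
qed

lemma quad_lower:
  assumes "posdef C"
  shows "\<exists>c>0. \<forall>x. c * ((x::real^'n) \<bullet> x) \<le> x \<bullet> (C *v x)"
proof -
  have cont: "continuous_on (sphere 0 1) (\<lambda>x::real^'n. x \<bullet> (C *v x))"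
    by (intro continuous_intros linear_continuous_on matrix_vector_mul_bounded_linear)
  obtain e :: "real^'n" where e: "norm e = 1" using vector_choose_size[of 1] by auto
  then have ne: "sphere (0::real^'n) 1 \<noteq> {}" by auto
  obtain x0 where x0: "x0 \<in> sphere 0 1" "\<And>y. y \<in> sphere 0 1 \<Longrightarrow> x0 \<bullet> (C *v x0) \<le> y \<bullet> (C *v y)"
    using continuous_attains_inf[OF compact_sphere ne cont] by blast
  define c where "c = x0 \<bullet> (C *v x0)"
  have "x0 \<noteq> 0" using x0(1) by auto
  then have c: "c > 0" unfolding c_def using assms unfolding posdef_def by auto
  have "c * (x \<bullet> x) \<le> x \<bullet> (C *v x)" for x
  proof (cases "x = 0")
    case True then show ?thesis by simp
  next
    case False
    define y where "y = (1 / norm x) *\<^sub>R x"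
    have "y \<in> sphere 0 1" using False by (simp add: y_def)
    then have "c \<le> y \<bullet> (C *v y)" using x0(2) c_def by auto
    also have "y \<bullet> (C *v y) = (x \<bullet> (C *v x)) / (norm x)^2"
      by (simp add: y_def matrix_vector_mult_scaleR power2_eq_square)
    finally have "c * (norm x)^2 \<le> x \<bullet> (C *v x)" using False by (simp add: field_simps)
    then show ?thesis by (simp add: power2_norm_eq_inner)
  qed
  with c show ?thesis by blast
qed



lemma cl_upd: "t \<le> s \<Longrightarrow> cl_state A B K (f(s := b)) x t = cl_state A B K f x t"
  by (induction t) auto

lemma cl_Suc_upd: "cl_state A B K (f(t := b)) x (Suc t)
   = (A + (if b then 1 else 0) *\<^sub>R (B ** K)) *v cl_state A B K f x t"
  by (simp add: cl_upd)

lemma meas_cl: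
  assumes "(\<lambda>x. x) \<in> borel_measurable M"
  shows "(\<lambda>p. cl_state A B K (snd p) (fst p) t) \<in> borel_measurable (M \<Otimes>\<^sub>M measure_pmf N)"
proof (induction t)
  case 0
  then show ?case using measurable_compose[OF measurable_fst assms] by simp
next
  case (Suc t)
  have eq: "(\<lambda>p. cl_state A B K (snd p) (fst p) (Suc t)) =
     (\<lambda>p. if snd p t then (A + B ** K) *v cl_state A B K (snd p) (fst p) t
          else A *v cl_state A B K (snd p) (fst p) t)"
    by (rule ext) simp
  have lin: "continuous_on UNIV ((*v) X)" for X :: "real^'a^'a"
    by (intro linear_continuous_on matrix_vector_mul_bounded_linear)
  have set: "{p \<in> space (M \<Otimes>\<^sub>M measure_pmf N). snd p t} \<in> sets (M \<Otimes>\<^sub>M measure_pmf N)"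
  proof -
    have [measurable]: "(\<lambda>p. snd p t) \<in> measurable (M \<Otimes>\<^sub>M measure_pmf N) (count_space UNIV)"
      by (rule measurable_compose[OF measurable_snd]) simp
    show ?thesis by measurable
  qed
  show ?case unfolding eq
    by (intro measurable_If set borel_measurable_continuous_on[OF lin] Suc)
qed



lemma E_step:
  fixes A P :: "real^'n^'n" and B :: "real^'m^'n" and K :: "real^'n^'m"
  assumes q: "0 \<le> q" "q \<le> 1" and rho: "0 \<le> \<rho>"
    and step: "\<And>z. (1 - q) * (((A + B ** K) *v z) \<bullet> (P *v ((A + B ** K) *v z)))
           + q * ((A *v z) \<bullet> (P *v (A *v z))) \<le> \<rho> * (z \<bullet> (P *v z))"
    and Pnn: "\<And>z. 0 \<le> z \<bullet> (P *v z)"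
  shows "(\<integral>\<^sup>+l. ennreal (cl_state A B K l x (Suc t) \<bullet> (P *v cl_state A B K l x (Suc t)))
            \<partial>Pi_pmf {..<Suc t} False (\<lambda>_. bernoulli_pmf (1 - q)))
       \<le> ennreal \<rho> * (\<integral>\<^sup>+l. ennreal (cl_state A B K l x t \<bullet> (P *v cl_state A B K l x t))
            \<partial>Pi_pmf {..<t} False (\<lambda>_. bernoulli_pmf (1 - q)))"
proof -
  define N where "N = Pi_pmf {..<t} False (\<lambda>_. bernoulli_pmf (1 - q))"
  define V where "V = (\<lambda>z::real^'n. z \<bullet> (P *v z))"
  define z where "z = (\<lambda>l. cl_state A B K l x t)"
  have ins: "{..<Suc t} = insert t {..<t}" by auto
  have "Pi_pmf {..<Suc t} False (\<lambda>_. bernoulli_pmf (1 - q))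
        = map_pmf (\<lambda>(y,f). f(t:=y)) (pair_pmf (bernoulli_pmf (1 - q)) N)"
    unfolding ins N_def by (rule Pi_pmf_insert) auto
  then have "(\<integral>\<^sup>+l. ennreal (V (cl_state A B K l x (Suc t)))
            \<partial>Pi_pmf {..<Suc t} False (\<lambda>_. bernoulli_pmf (1 - q)))
      = (\<integral>\<^sup>+y. \<integral>\<^sup>+f. ennreal (V (cl_state A B K (f(t:=y)) x (Suc t))) \<partial>N \<partial>bernoulli_pmf (1 - q))"
    by (simp add: nn_integral_pair_pmf')
  also have "\<dots> = (\<integral>\<^sup>+y. \<integral>\<^sup>+f. ennreal (V ((A + (if y then 1 else 0) *\<^sub>R (B ** K)) *v z f)) \<partial>N
                     \<partial>bernoulli_pmf (1 - q))"
    unfolding cl_Suc_upd z_def ..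
  also have "\<dots> = (\<integral>\<^sup>+f. ennreal (V ((A + B ** K) *v z f)) \<partial>N) * ennreal (1 - q)
                 + (\<integral>\<^sup>+f. ennreal (V (A *v z f)) \<partial>N) * ennreal q"
    using q by (subst nn_integral_bernoulli_pmf) auto
  also have "\<dots> = (\<integral>\<^sup>+f. ennreal (V ((A + B ** K) *v z f)) * ennreal (1 - q)
                   + ennreal (V (A *v z f)) * ennreal q \<partial>N)"
    by (simp add: nn_integral_add nn_integral_multc)
  also have "\<dots> \<le> (\<integral>\<^sup>+f. ennreal \<rho> * ennreal (V (z f)) \<partial>N)"
  proof (rule nn_integral_mono)
    fix f
    have "ennreal (V ((A + B ** K) *v z f)) * ennreal (1 - q) + ennreal (V (A *v z f)) * ennreal q
        = ennreal ((1 - q) * V ((A + B ** K) *v z f) + q * V (A *v z f))"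
      using q Pnn unfolding V_def by (simp add: ennreal_mult' ennreal_plus mult.commute)
    also have "\<dots> \<le> ennreal (\<rho> * V (z f))"
      using step[of "z f"] unfolding V_def by (rule ennreal_leI)
    also have "\<dots> = ennreal \<rho> * ennreal (V (z f))" using rho Pnn[of "z f"] unfolding V_def by (simp add: ennreal_mult)
    finally show "ennreal (V ((A + B ** K) *v z f)) * ennreal (1 - q) + ennreal (V (A *v z f)) * ennreal q
        \<le> ennreal \<rho> * ennreal (V (z f))" .
  qed
  also have "\<dots> = ennreal \<rho> * (\<integral>\<^sup>+f. ennreal (V (z f)) \<partial>N)"
    by (simp add: nn_integral_cmult)
  finally show ?thesis unfolding V_def z_def N_def .
qed



lemma ms_stab_lyap:
  fixes A P C :: "real^'n^'n" and B :: "real^'m^'n" and K :: "real^'n^'m"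
    and M :: "(real^'n) measure"
  assumes Ppd: "posdef P" and Cpd: "posdef C"
    and M_prob: "prob_space M" and M_sets: "sets M = sets borel"
    and M_cov: "integrable M (\<lambda>x. x \<bullet> x)"
    and q: "0 \<le> q" "q \<le> 1"
    and key: "\<And>x. (1 - q) * (((A + B ** K) *v x) \<bullet> (P *v ((A + B ** K) *v x)))
           + q * ((A *v x) \<bullet> (P *v (A *v x))) = x \<bullet> (P *v x) - x \<bullet> (C *v x)"
  shows "ms_stabilizes A B K q M"
proof -
  obtain c where c: "c > 0" "\<And>x. c * ((x::real^'n) \<bullet> x) \<le> x \<bullet> (C *v x)"
    using quad_lower[OF Cpd] by blast
  obtain p0 where p0: "p0 > 0" "\<And>x. p0 * ((x::real^'n) \<bullet> x) \<le> x \<bullet> (P *v x)"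
    using quad_lower[OF Ppd] by blast
  obtain KP where KP: "KP > 0" "\<And>x. (x::real^'n) \<bullet> (P *v x) \<le> KP * (x \<bullet> x)"
    using quad_upper by blast
  define c' where "c' = min c KP"
  define \<rho> where "\<rho> = 1 - c' / KP"
  have c'pos: "c' > 0" using c KP by (simp add: c'_def)
  have rho: "0 \<le> \<rho>" "\<rho> < 1" using c'pos KP by (auto simp: \<rho>_def c'_def field_simps)
  have Pnn: "\<And>z. 0 \<le> z \<bullet> (P *v z)" using posdef_nonneg[OF Ppd] .
  have step: "(1 - q) * (((A + B ** K) *v z) \<bullet> (P *v ((A + B ** K) *v z)))
           + q * ((A *v z) \<bullet> (P *v (A *v z))) \<le> \<rho> * (z \<bullet> (P *v z))" for z
  proof -
    have "c' * (z \<bullet> z) \<le> z \<bullet> (C *v z)"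
      using c(2)[of z] by (smt (verit) c'_def inner_ge_zero min.cobounded1 mult_right_mono)
    moreover have "(c' / KP) * (z \<bullet> (P *v z)) \<le> c' * (z \<bullet> z)"
      using KP(2)[of z] KP(1) c'pos by (simp add: field_simps)
    ultimately show ?thesis unfolding key \<rho>_def by (simp add: algebra_simps)
  qed
  define N where "N = (\<lambda>t::nat. Pi_pmf {..<t} False (\<lambda>_. bernoulli_pmf (1 - q)))"
  define V where "V = (\<lambda>z::real^'n. z \<bullet> (P *v z))"
  have Ebound: "(\<integral>\<^sup>+l. ennreal (V (cl_state A B K l x t)) \<partial>N t) \<le> ennreal (\<rho> ^ t * V x)" for x t
  proof (induction t)
    case 0
    then show ?case by (simp add: N_def V_def Pnn)
  next
    case (Suc t)
    have "(\<integral>\<^sup>+l. ennreal (V (cl_state A B K l x (Suc t))) \<partial>N (Suc t))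
        \<le> ennreal \<rho> * (\<integral>\<^sup>+l. ennreal (V (cl_state A B K l x t)) \<partial>N t)"
      unfolding N_def V_def by (rule E_step[OF q rho(1) step Pnn])
    also have "\<dots> \<le> ennreal \<rho> * ennreal (\<rho> ^ t * V x)"
      by (rule mult_left_mono[OF Suc]) simp
    also have "\<dots> = ennreal (\<rho> ^ Suc t * V x)"
      using rho Pnn[of x] by (simp add: ennreal_mult[symmetric] V_def mult.assoc)
    finally show ?case .
  qed
  define D where "D = KP / p0"
  have Wbound: "(\<integral>\<^sup>+l. ennreal (cl_state A B K l x t \<bullet> cl_state A B K l x t) \<partial>N t)
       \<le> ennreal (\<rho> ^ t * D * (x \<bullet> x))" for x t
  proof -
    have "(\<integral>\<^sup>+l. ennreal (cl_state A B K l x t \<bullet> cl_state A B K l x t) \<partial>N t)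
        \<le> (\<integral>\<^sup>+l. ennreal (1 / p0) * ennreal (V (cl_state A B K l x t)) \<partial>N t)"
    proof (rule nn_integral_mono)
      fix l
      let ?z = "cl_state A B K l x t"
      have "?z \<bullet> ?z \<le> (1 / p0) * V ?z" using p0(2)[of ?z] p0(1) by (simp add: V_def field_simps)
      then show "ennreal (?z \<bullet> ?z) \<le> ennreal (1 / p0) * ennreal (V ?z)"
        using p0(1) Pnn[of ?z] by (simp add: ennreal_mult[symmetric] V_def ennreal_leI)
    qed
    also have "\<dots> = ennreal (1 / p0) * (\<integral>\<^sup>+l. ennreal (V (cl_state A B K l x t)) \<partial>N t)"
      by (simp add: nn_integral_cmult)
    also have "\<dots> \<le> ennreal (1 / p0) * ennreal (\<rho> ^ t * V x)"
      by (rule mult_left_mono[OF Ebound]) simp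
    also have "\<dots> = ennreal ((1 / p0) * (\<rho> ^ t * V x))"
      using p0(1) rho Pnn[of x] by (simp add: ennreal_mult[symmetric] V_def)
    also have "\<dots> \<le> ennreal (\<rho> ^ t * D * (x \<bullet> x))"
    proof (rule ennreal_leI)
      have "V x \<le> KP * (x \<bullet> x)" using KP(2) V_def by simp
      then have "\<rho> ^ t * V x \<le> \<rho> ^ t * (KP * (x \<bullet> x))" using rho by (simp add: mult_left_mono)
      then show "(1 / p0) * (\<rho> ^ t * V x) \<le> \<rho> ^ t * D * (x \<bullet> x)"
        using p0(1) by (simp add: D_def field_simps)
    qed
    finally show ?thesis .
  qed
  interpret M: prob_space M by (rule M_prob)
  have idm: "(\<lambda>x. x) \<in> borel_measurable M" by (subst measurable_cong_sets[OF M_sets refl]) simp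
  define I where "I = (\<integral>x. x \<bullet> x \<partial>M)"
  have I0: "0 \<le> I" unfolding I_def by simp
  have bound: "0 \<le> ms_energy A B K q M t \<and> ms_energy A B K q M t \<le> \<rho> ^ t * D * I" for t
  proof -
    let ?F = "\<lambda>p::(real^'n) \<times> (nat \<Rightarrow> bool). cl_state A B K (snd p) (fst p) t \<bullet> cl_state A B K (snd p) (fst p) t"
    have Fm: "?F \<in> borel_measurable (M \<Otimes>\<^sub>M measure_pmf (N t))"
      by (intro borel_measurable_inner meas_cl[OF idm])
    have eqF: "(\<lambda>(x0, lam). cl_state A B K lam x0 t \<bullet> cl_state A B K lam x0 t) = ?F"
      by (auto simp: case_prod_beta)
    have "ms_energy A B K q M t = integral\<^sup>L (M \<Otimes>\<^sub>M measure_pmf (N t)) ?F"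
      unfolding ms_energy_def N_def eqF ..
    also have "\<dots> = enn2real (\<integral>\<^sup>+p. ennreal (?F p) \<partial>(M \<Otimes>\<^sub>M measure_pmf (N t)))"
      by (rule integral_eq_nn_integral[OF Fm]) simp
    finally have e1: "ms_energy A B K q M t = enn2real (\<integral>\<^sup>+p. ennreal (?F p) \<partial>(M \<Otimes>\<^sub>M measure_pmf (N t)))" .
    have sf: "sigma_finite_measure (measure_pmf (N t))"
      by (rule prob_space_imp_sigma_finite) (rule measure_pmf.prob_space_axioms)
    have Fm': "(\<lambda>p. ennreal (?F p)) \<in> borel_measurable (M \<Otimes>\<^sub>M measure_pmf (N t))"
      by (rule measurable_compose[OF Fm measurable_ennreal])
    have "(\<integral>\<^sup>+p. ennreal (?F p) \<partial>(M \<Otimes>\<^sub>M measure_pmf (N t)))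
        = (\<integral>\<^sup>+x. \<integral>\<^sup>+l. ennreal (?F (x, l)) \<partial>N t \<partial>M)"
      using sigma_finite_measure.nn_integral_fst[OF sf Fm'] by simp
    also have "\<dots> \<le> (\<integral>\<^sup>+x. ennreal (\<rho> ^ t * D * (x \<bullet> x)) \<partial>M)"
      by (rule nn_integral_mono) (use Wbound in simp)
    also have "\<dots> = ennreal (\<integral>x. \<rho> ^ t * D * (x \<bullet> x) \<partial>M)"
      using rho p0 KP by (intro nn_integral_eq_integral) (auto simp: M_cov D_def)
    also have "\<dots> = ennreal (\<rho> ^ t * D * I)" by (simp add: I_def)
    finally have le: "(\<integral>\<^sup>+p. ennreal (?F p) \<partial>(M \<Otimes>\<^sub>M measure_pmf (N t))) \<le> ennreal (\<rho> ^ t * D * I)" .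
    have "0 \<le> \<rho> ^ t * D * I" using rho p0 KP I0 by (simp add: D_def)
    then show ?thesis unfolding e1 using le by (simp add: enn2real_leI)
  qed
  have "(\<lambda>t. \<rho> ^ t * D * I) \<longlonglongrightarrow> 0 * D * I"
    by (intro tendsto_mult_right LIMSEQ_realpow_zero rho)
  then have lim: "(\<lambda>t. \<rho> ^ t * D * I) \<longlonglongrightarrow> 0" by simp
  show ?thesis unfolding ms_stabilizes_def
    by (rule tendsto_sandwich[OF _ _ tendsto_const lim]) (use bound in auto)
qed



lemma stab_of_C:
  fixes A Q :: "real^'n^'n" and B :: "real^'m^'n" and R :: "real^'m^'m"
    and M :: "(real^'n) measure"
  assumes Q_pd: "posdef Q" and R_pd: "posdef R"
    and M_prob: "prob_space M" and M_sets: "sets M = sets borel"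
    and M_cov: "integrable M (\<lambda>x. x \<bullet> x)"
    and q: "0 \<le> q" "q \<le> 1"
    and uniq: "\<exists>!X. posdef X \<and> mre A B Q R qh X"
    and Cpd: "posdef (Cmat A B Q R q qh)"
  shows "ms_stabilizes A B (Khat A B Q R qh) q M"
proof -
  define P where "P = Phat A B Q R qh"
  have PP: "posdef P \<and> mre A B Q R qh P"
    unfolding P_def Phat_def by (rule theI'[OF uniq])
  have KK: "Khat A B Q R qh = - (matrix_inv (R + transpose B ** P ** B) ** transpose B ** P ** A)"
    unfolding Khat_def P_def Let_def ..
  have CC: "Cmat A B Q R q qh = Q + (1 - q) *\<^sub>R (transpose (Khat A B Q R qh) ** R ** (Khat A B Q R qh))
        - (q - qh) *\<^sub>R (transpose A ** P ** B ** matrix_inv (R + transpose B ** P ** B) ** transpose B ** P ** A)"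
    unfolding Cmat_def P_def Let_def ..
  show ?thesis
  proof (rule ms_stab_lyap[OF _ Cpd M_prob M_sets M_cov q])
    show "posdef P" using PP by blast
    fix x
    show "(1 - q) * (((A + B ** Khat A B Q R qh) *v x) \<bullet> (P *v ((A + B ** Khat A B Q R qh) *v x)))
           + q * ((A *v x) \<bullet> (P *v (A *v x))) = x \<bullet> (P *v x) - x \<bullet> (Cmat A B Q R q qh *v x)"
      unfolding CC KK using key_identity[of P R A B Q qh q x] PP R_pd by simp
  qed
qed



theorem lemma3:
  fixes A Q :: "real^'n^'n" and B :: "real^'m^'n" and R :: "real^'m^'m"
    and M :: "(real^'n) measure"
    and q qc \<beta> :: real and Nq :: nat
  assumes stab: "stabilizable A B"
    and Q_pd: "posdef Q" and R_pd: "posdef R"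
    and M_prob: "prob_space M" and M_sets: "sets M = sets borel"
    and M_cov: "integrable M (\<lambda>x. x \<bullet> x)"
    and q_range: "0 < q" "q < 1"
    and qc_le: "qc \<le> 1"
    and qc_crit: "\<forall>p. 0 \<le> p \<and> p < qc \<longrightarrow> (\<exists>!X. posdef X \<and> mre A B Q R p X)"
    and q_lt_qc: "q < qc"
    and beta: "0 < \<beta>" "\<beta> < 1"
    and delta_pos: "delta_bar A B Q R qc q > 0"
    and Nq_large: "ereal (real Nq) > ereal (ln (2 / \<beta>)) / (2 * (delta_bar A B Q R qc q)\<^sup>2)"
  shows "measure_pmf.prob (Pi_pmf {1..Nq} False (\<lambda>_. bernoulli_pmf (1 - q)))
           {lam. qhat Nq lam < qc \<longrightarrow> ms_stabilizes A B (Khat A B Q R (qhat Nq lam)) q M}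
         \<ge> 1 - \<beta>"
proof -
  define L where "L = ln (2 / \<beta>)"
  have L: "L > 0" unfolding L_def using beta by simp
  define d where "d = delta_bar A B Q R qc q"
  define S where "S = {\<delta>. \<delta> \<ge> 0 \<and>
      (\<forall>qh. 0 \<le> qh \<and> qh < qc \<and> q - qh < \<delta> \<longrightarrow> posdef (Cmat A B Q R q qh))}"
  have dS: "d = Sup (ereal ` S)" unfolding d_def S_def delta_bar_def ..
  have Npos: "Nq > 0"
  proof (cases d)
    case (real r)
    then have "r > 0" using delta_pos d_def by simp
    then have "ereal (L / (2 * r\<^sup>2)) < ereal (real Nq)" using Nq_large real
      unfolding d_def[symmetric] L_def[symmetric] by (simp add: power2_eq_square)
    then have "L / (2 * r\<^sup>2) < real Nq" by simp
    moreover have "L / (2 * r\<^sup>2) > 0" using L \<open>r > 0\<close> by simp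
    ultimately show ?thesis by simp
  next
    case PInf
    then show ?thesis using Nq_large unfolding d_def[symmetric] by simp
  next
    case MInf
    then show ?thesis using delta_pos d_def by simp
  qed
  define r0 where "r0 = sqrt (L / (2 * real Nq))"
  have r0: "r0 \<ge> 0" "r0\<^sup>2 = L / (2 * real Nq)" using L Npos by (auto simp: r0_def)
  have "ereal r0 < d"
  proof (cases d)
    case (real r)
    then have rpos: "r > 0" using delta_pos d_def by simp
    then have "ereal (L / (2 * r\<^sup>2)) < ereal (real Nq)" using Nq_large real
      unfolding d_def[symmetric] L_def[symmetric] by (simp add: power2_eq_square)
    then have "L / (2 * r\<^sup>2) < real Nq" by simp
    then have "L < real Nq * (2 * r\<^sup>2)" using rpos by (simp add: field_simps)
    then have "L / (2 * real Nq) < r\<^sup>2" using Npos by (simp add: field_simps)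
    then have "r0\<^sup>2 < r\<^sup>2" using r0 by simp
    then have "r0 < r" using rpos r0(1) by (smt (verit) power_mono)
    then show ?thesis using real by simp
  qed (use delta_pos d_def in auto)
  then have "\<exists>x\<in>ereal ` S. ereal r0 < x" unfolding dS by (simp only: less_Sup_iff)
  then obtain \<delta> where \<delta>S: "\<delta> \<in> S" and \<delta>r: "r0 < \<delta>" by auto
  have \<delta>prop: "\<And>qh. 0 \<le> qh \<Longrightarrow> qh < qc \<Longrightarrow> q - qh < \<delta> \<Longrightarrow> posdef (Cmat A B Q R q qh)"
    using \<delta>S unfolding S_def by blast
  have "r0\<^sup>2 < \<delta>\<^sup>2" using \<delta>r r0(1) by (simp add: power_strict_mono)
  then have "L < 2 * real Nq * \<delta>\<^sup>2" using r0(2) Npos by (simp add: field_simps)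
  then have expb: "exp (- 2 * real Nq * \<delta>\<^sup>2) \<le> \<beta>"
  proof -
    assume "L < 2 * real Nq * \<delta>\<^sup>2"
    then have "exp (- 2 * real Nq * \<delta>\<^sup>2) < exp (- L)" by simp
    also have "exp (- L) = \<beta> / 2"
    proof -
      have "exp L = 2 / \<beta>" using beta unfolding L_def by (intro exp_ln) simp
      then show ?thesis by (simp add: exp_minus)
    qed
    finally show ?thesis using beta by simp
  qed
  define p where "p = 1 - q"
  define coins where "coins = Pi_pmf {1..Nq} False (\<lambda>_. bernoulli_pmf p)"
  define cnt where "cnt = (\<lambda>lam::nat \<Rightarrow> bool. card {i\<in>{1..Nq}. lam i})"
  have qhat_eq: "qhat Nq lam = 1 - real (cnt lam) / real Nq" for lam
  proof -
    have "(\<Sum>i\<in>{1..Nq}. (1 - of_bool (lam i))) = real Nq - (\<Sum>i\<in>{1..Nq}. of_bool (lam i) :: real)"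
      by (simp add: sum_subtractf)
    also have "(\<Sum>i\<in>{1..Nq}. of_bool (lam i) :: real) = real (cnt lam)"
    proof -
      have e: "{i\<in>{1..Nq}. lam i} = {1..Nq} \<inter> {i. lam i}" by auto
      show ?thesis unfolding cnt_def e by (rule sum_of_bool_eq) auto
    qed
    finally have "qhat Nq lam = (real Nq - real (cnt lam)) / real Nq" unfolding qhat_def by simp
    then show ?thesis using Npos by (simp add: diff_divide_distrib)
  qed
  have qhat_nn: "qhat Nq lam \<ge> 0" for lam
    unfolding qhat_def by (intro divide_nonneg_nonneg sum_nonneg) auto
  have sub: "{lam. q - qhat Nq lam < \<delta>} \<subseteq>
      {lam. qhat Nq lam < qc \<longrightarrow> ms_stabilizes A B (Khat A B Q R (qhat Nq lam)) q M}"
  proof safe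
    fix lam assume h: "q - qhat Nq lam < \<delta>" "qhat Nq lam < qc"
    show "ms_stabilizes A B (Khat A B Q R (qhat Nq lam)) q M"
    proof (rule stab_of_C[OF Q_pd R_pd M_prob M_sets M_cov])
      show "0 \<le> q" "q \<le> 1" using q_range by auto
      show "\<exists>!X. posdef X \<and> mre A B Q R (qhat Nq lam) X" using qc_crit qhat_nn h(2) by blast
      show "posdef (Cmat A B Q R q (qhat Nq lam))" by (rule \<delta>prop[OF qhat_nn h(2) h(1)])
    qed
  qed
  have bad: "measure_pmf.prob coins {lam. \<delta> \<le> q - qhat Nq lam} \<le> \<beta>"
  proof -
    have binom: "binomial_pmf Nq p = map_pmf cnt coins"
      unfolding coins_def cnt_def by (rule binomial_pmf_altdef') (use q_range in \<open>auto simp: p_def\<close>)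
    have "{lam. \<delta> \<le> q - qhat Nq lam} = cnt -` {x. p + \<delta> \<le> real x / real Nq}"
      by (auto simp: qhat_eq p_def)
    then have "measure_pmf.prob coins {lam. \<delta> \<le> q - qhat Nq lam}
        = measure_pmf.prob (binomial_pmf Nq p) {x. p + \<delta> \<le> real x / real Nq}"
      by (simp add: binom)
    also have "\<dots> \<le> exp (real_of_int (- 2 * int Nq) * \<delta>\<^sup>2)"
      by (rule binomial_distribution.prob_ge') 
         (use q_range Npos \<delta>S in \<open>auto simp: binomial_distribution_def p_def S_def\<close>)
    also have "\<dots> = exp (- 2 * real Nq * \<delta>\<^sup>2)" by simp
    finally show ?thesis using expb by simp
  qed
  have "1 - \<beta> \<le> 1 - measure_pmf.prob coins {lam. \<delta> \<le> q - qhat Nq lam}" using bad by simp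
  also have "\<dots> = measure_pmf.prob coins (UNIV - {lam. \<delta> \<le> q - qhat Nq lam})"
    by (subst measure_pmf.prob_compl[symmetric]) auto
  also have "UNIV - {lam. \<delta> \<le> q - qhat Nq lam} = {lam. q - qhat Nq lam < \<delta>}" by auto
  also have "measure_pmf.prob coins {lam. q - qhat Nq lam < \<delta>} \<le> measure_pmf.prob coins
      {lam. qhat Nq lam < qc \<longrightarrow> ms_stabilizes A B (Khat A B Q R (qhat Nq lam)) q M}"
    by (rule measure_pmf.finite_measure_mono[OF sub]) simp
  finally show ?thesis unfolding coins_def p_def .
qed

end
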